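(* Let $R$ be a finite Frobenius ring and let $R/\mathrm{rad}(R)\cong(\mathbb{F}_{q_1})^{m_1\times m_1}\times\cdots\times(\mathbb{F}_{q_t})^{m_t\times m_t}$ be its Wedderburn–Artin decomposition (prime powers $q_i$, positive integers $m_i$). Let $\omega$ be the normalized homogeneous weight on $R$. Then there exists $x\in R\setminus\{0\}$ with $\omega(x)=0$ if and only if $(q_i,m_i)=(2,1)$ for at least two indices $i\in\{1,\ldots,t\}$.
   Context: $\mathrm{rad}(R)$ is the Jacobson radical. The normalized homogeneous weight on a finite Frobenius ring $R$ is the unique map $\omega:R\to\mathbb{R}$ with $\omega(0)=0$, $\omega(x)=\omega(y)$ whenever $Rx=Ry$, and $\sum_{y\in Rx}\omega(y)=|Rx|$ for every $x\in R\setminus\{0\}$. *)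

theory Defs
  imports Complex_Main "HOL-Algebra.Ring"
begin

definition left_ideal :: "'a::ring_1 set \<Rightarrow> bool" where
  "left_ideal I \<longleftrightarrow> 0 \<in> I \<and> (\<forall>x\<in>I. \<forall>y\<in>I. x + y \<in> I) \<and> (\<forall>r. \<forall>x\<in>I. r * x \<in> I)"

definition right_ideal :: "'a::ring_1 set \<Rightarrow> bool" where
  "right_ideal I \<longleftrightarrow> 0 \<in> I \<and> (\<forall>x\<in>I. \<forall>y\<in>I. x + y \<in> I) \<and> (\<forall>r. \<forall>x\<in>I. x * r \<in> I)"

definition maximal_left_ideal :: "'a::ring_1 set \<Rightarrow> bool" where
  "maximal_left_ideal I \<longleftrightarrow> left_ideal I \<and> I \<noteq> UNIV \<and>
     (\<forall>J. left_ideal J \<and> I \<subseteq> J \<longrightarrow> J = I \<or> J = UNIV)"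

definition minimal_left_ideal :: "'a::ring_1 set \<Rightarrow> bool" where
  "minimal_left_ideal I \<longleftrightarrow> left_ideal I \<and> I \<noteq> {0} \<and>
     (\<forall>J. left_ideal J \<and> J \<subseteq> I \<longrightarrow> J = {0} \<or> J = I)"

definition minimal_right_ideal :: "'a::ring_1 set \<Rightarrow> bool" where
  "minimal_right_ideal I \<longleftrightarrow> right_ideal I \<and> I \<noteq> {0} \<and>
     (\<forall>J. right_ideal J \<and> J \<subseteq> I \<longrightarrow> J = {0} \<or> J = I)"

definition jacobson_rad :: "'a::ring_1 set" where
  "jacobson_rad = \<Inter> {I. maximal_left_ideal I}"

text \<open>Left (right) socle: the sum of all minimal left (right) ideals, i.e. the
  smallest left (right) ideal containing all of them.\<close>
definition left_socle :: "'a::ring_1 set" where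
  "left_socle = \<Inter> {J. left_ideal J \<and> (\<forall>I. minimal_left_ideal I \<longrightarrow> I \<subseteq> J)}"

definition right_socle :: "'a::ring_1 set" where
  "right_socle = \<Inter> {J. right_ideal J \<and> (\<forall>I. minimal_right_ideal I \<longrightarrow> I \<subseteq> J)}"

text \<open>Finite Frobenius ring: R is finite, and R/rad(R) is isomorphic to soc(R) both as
  left and as right R-modules.  An isomorphism R/rad(R) ~= soc(R) is the same as an
  R-linear map R \<rightarrow> R with image soc(R) and kernel rad(R).\<close>
definition finite_frobenius_ring :: "'a::ring_1 itself \<Rightarrow> bool" where
  "finite_frobenius_ring (_ :: 'a itself) \<longleftrightarrow>
     finite (UNIV :: 'a set) \<and>
     (\<exists>f :: 'a \<Rightarrow> 'a. (\<forall>x y. f (x + y) = f x + f y) \<and> (\<forall>r x. f (r * x) = r * f x) \<and>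
        range f = left_socle \<and> {x. f x = 0} = jacobson_rad) \<and>
     (\<exists>g :: 'a \<Rightarrow> 'a. (\<forall>x y. g (x + y) = g x + g y) \<and> (\<forall>r x. g (x * r) = g x * r) \<and>
        range g = right_socle \<and> {x. g x = 0} = jacobson_rad)"

definition principal_left_ideal :: "'a::ring_1 \<Rightarrow> 'a set" where
  "principal_left_ideal x = range (\<lambda>r. r * x)"

definition normalized_homogeneous_weight :: "('a::ring_1 \<Rightarrow> real) \<Rightarrow> bool" where
  "normalized_homogeneous_weight \<omega> \<longleftrightarrow>
     \<omega> 0 = 0 \<and>
     (\<forall>x y. principal_left_ideal x = principal_left_ideal y \<longrightarrow> \<omega> x = \<omega> y) \<and>
     (\<forall>x. x \<noteq> 0 \<longrightarrow> (\<Sum>y\<in>principal_left_ideal x. \<omega> y) = real (card (principal_left_ideal x)))"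

text \<open>wedderburn_artin t q m K \<phi>: the fields K i (i < t) are finite fields
  with q i elements, m i \<ge> 1, and phi is a surjective unital ring
  homomorphism from R onto the product of the matrix rings
  (K i)^(m i \<times> m i) (i < t) whose kernel is rad(R); i.e. it induces
  R/rad(R) ~= Prod_{i<t} (F_{q i})^{m i \<times> m i}.  The entry (j,k) of the i-th matrix
  component of \<phi> x is \<phi> x i j k; entries outside the index ranges
  are irrelevant.\<close>
definition wedderburn_artin ::
  "nat \<Rightarrow> (nat \<Rightarrow> nat) \<Rightarrow> (nat \<Rightarrow> nat) \<Rightarrow> (nat \<Rightarrow> 'c ring) \<Rightarrow> ('a::ring_1 \<Rightarrow> nat \<Rightarrow> nat \<Rightarrow> nat \<Rightarrow> 'c) \<Rightarrow> bool"
where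
  "wedderburn_artin t q m K \<phi> \<longleftrightarrow>
     (\<forall>i<t. field (K i) \<and> finite (carrier (K i)) \<and> card (carrier (K i)) = q i \<and> m i \<ge> 1) \<and>
     (\<forall>x. \<forall>i<t. \<forall>j<m i. \<forall>k<m i. \<phi> x i j k \<in> carrier (K i)) \<and>
     (\<forall>x y. \<forall>i<t. \<forall>j<m i. \<forall>k<m i.
        \<phi> (x + y) i j k = \<phi> x i j k \<oplus>\<^bsub>K i\<^esub> \<phi> y i j k) \<and>
     (\<forall>x y. \<forall>i<t. \<forall>j<m i. \<forall>k<m i.
        \<phi> (x * y) i j k = (\<Oplus>\<^bsub>K i\<^esub> l\<in>{..<m i}. \<phi> x i j l \<otimes>\<^bsub>K i\<^esub> \<phi> y i l k)) \<and>
     (\<forall>i<t. \<forall>j<m i. \<forall>k<m i. \<phi> 1 i j k = (if j = k then \<one>\<^bsub>K i\<^esub> else \<zero>\<^bsub>K i\<^esub>)) \<and>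
     (\<forall>M. (\<forall>i<t. \<forall>j<m i. \<forall>k<m i. M i j k \<in> carrier (K i)) \<longrightarrow>
        (\<exists>x. \<forall>i<t. \<forall>j<m i. \<forall>k<m i. \<phi> x i j k = M i j k)) \<and>
     (\<forall>x. (\<forall>i<t. \<forall>j<m i. \<forall>k<m i. \<phi> x i j k = \<zero>\<^bsub>K i\<^esub>) \<longleftrightarrow> x \<in> jacobson_rad)"

end

theory Submission
  imports Defs
begin

locale WAF =
  fixes t :: nat and q m :: "nat \<Rightarrow> nat" and K :: "nat \<Rightarrow> 'c ring"
    and \<phi> :: "'a::ring_1 \<Rightarrow> nat \<Rightarrow> nat \<Rightarrow> nat \<Rightarrow> 'c"
    and f :: "'a \<Rightarrow> 'a"
  assumes wa: "wedderburn_artin t q m K \<phi>"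
    and fadd: "\<And>x y. f (x + y) = f x + f y"
    and fmul: "\<And>r x. f (r * x) = r * f x"
    and fker: "{x. f x = 0} = jacobson_rad"
    and fin: "finite (UNIV :: 'a set)"
    and frange: "range f = left_socle"
begin

lemmas W = wa[unfolded wedderburn_artin_def]
lemma W1: "\<forall>i<t. field (K i) \<and> finite (carrier (K i)) \<and> card (carrier (K i)) = q i \<and> m i \<ge> 1"
  using W by (rule conjunct1)
lemma fieldK: "i < t \<Longrightarrow> field (K i)"
  using W1 by simp
lemma ringK: "i < t \<Longrightarrow> ring (K i)"
  using fieldK by (simp add: cring.axioms(1) domain.axioms(1) field.axioms(1))
lemma cringK: "i < t \<Longrightarrow> cring (K i)"
  using fieldK by (simp add: domain.axioms(1) field.axioms(1))
lemma finK: "i < t \<Longrightarrow> finite (carrier (K i))"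
  using W1 by simp
lemma cardK: "i < t \<Longrightarrow> card (carrier (K i)) = q i"
  using W1 by simp
lemma m_pos: "i < t \<Longrightarrow> m i \<ge> 1"
  using W1 by simp
lemma phi_carr: "i < t \<Longrightarrow> j < m i \<Longrightarrow> k < m i \<Longrightarrow> \<phi> x i j k \<in> carrier (K i)"
  using W[THEN conjunct2, THEN conjunct1] by simp
lemma phi_add: "i < t \<Longrightarrow> j < m i \<Longrightarrow> k < m i \<Longrightarrow>
   \<phi> (x + y) i j k = \<phi> x i j k \<oplus>\<^bsub>K i\<^esub> \<phi> y i j k"
  using W[THEN conjunct2, THEN conjunct2, THEN conjunct1] by simp
lemma phi_mult: "i < t \<Longrightarrow> j < m i \<Longrightarrow> k < m i \<Longrightarrow>
   \<phi> (x * y) i j k = (\<Oplus>\<^bsub>K i\<^esub> l\<in>{..<m i}. \<phi> x i j l \<otimes>\<^bsub>K i\<^esub> \<phi> y i l k)"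
  using W[THEN conjunct2, THEN conjunct2, THEN conjunct2, THEN conjunct1] by simp
lemma phi_one: "i < t \<Longrightarrow> j < m i \<Longrightarrow> k < m i \<Longrightarrow>
   \<phi> 1 i j k = (if j = k then \<one>\<^bsub>K i\<^esub> else \<zero>\<^bsub>K i\<^esub>)"
  using W[THEN conjunct2, THEN conjunct2, THEN conjunct2, THEN conjunct2, THEN conjunct1] by simp
lemma phi_surj: "(\<And>i j k. i < t \<Longrightarrow> j < m i \<Longrightarrow> k < m i \<Longrightarrow> M i j k \<in> carrier (K i)) \<Longrightarrow>
   \<exists>x. \<forall>i<t. \<forall>j<m i. \<forall>k<m i. \<phi> x i j k = M i j k"
  using W[THEN conjunct2, THEN conjunct2, THEN conjunct2, THEN conjunct2, THEN conjunct2, THEN conjunct1] by simp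
lemma phi_ker: "(\<forall>i<t. \<forall>j<m i. \<forall>k<m i. \<phi> x i j k = \<zero>\<^bsub>K i\<^esub>) \<longleftrightarrow> f x = 0"
proof -
  have "(\<forall>i<t. \<forall>j<m i. \<forall>k<m i. \<phi> x i j k = \<zero>\<^bsub>K i\<^esub>) \<longleftrightarrow> x \<in> jacobson_rad"
    using W[THEN conjunct2, THEN conjunct2, THEN conjunct2, THEN conjunct2, THEN conjunct2, THEN conjunct2] by simp
  also have "\<dots> \<longleftrightarrow> f x = 0" using fker by blast
  finally show ?thesis .
qed

lemma f0: "f 0 = 0"
proof -
  have "f 0 = f 0 + f 0" using fadd[of 0 0] by simp
  then show ?thesis by simp
qed
lemma fminus: "f (x - y) = f x - f y"
proof -
  have "f x = f (x - y) + f y" using fadd[of "x - y" y] by simp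
  then show ?thesis by (simp add: eq_diff_eq)
qed

lemma phi0: "i < t \<Longrightarrow> j < m i \<Longrightarrow> k < m i \<Longrightarrow> \<phi> 0 i j k = \<zero>\<^bsub>K i\<^esub>"
  using phi_ker[of 0] f0 by simp

lemma phi_eq_iff: "(\<forall>i<t. \<forall>j<m i. \<forall>k<m i. \<phi> w i j k = \<phi> w' i j k) \<longleftrightarrow> f w = f w'"
proof -
  have "f w = f w' \<longleftrightarrow> f (w - w') = 0" by (simp add: fminus)
  also have "\<dots> \<longleftrightarrow> (\<forall>i<t. \<forall>j<m i. \<forall>k<m i. \<phi> (w - w') i j k = \<zero>\<^bsub>K i\<^esub>)"
    using phi_ker by simp
  also have "\<dots> \<longleftrightarrow> (\<forall>i<t. \<forall>j<m i. \<forall>k<m i. \<phi> w i j k = \<phi> w' i j k)"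
  proof -
    have "\<phi> (w - w') i j k = \<zero>\<^bsub>K i\<^esub> \<longleftrightarrow> \<phi> w i j k = \<phi> w' i j k"
      if "i < t" "j < m i" "k < m i" for i j k
    proof -
      interpret R: ring "K i" using ringK that by blast
      have e: "\<phi> w i j k = \<phi> (w - w') i j k \<oplus>\<^bsub>K i\<^esub> \<phi> w' i j k"
        using phi_add[OF that, of "w - w'" w'] by simp
      have c1: "\<phi> (w - w') i j k \<in> carrier (K i)" and c2: "\<phi> w' i j k \<in> carrier (K i)"
        using phi_carr[OF that] by auto
      show ?thesis unfolding e using R.add.r_cancel_one[OF c2 c1] by simp
    qed
    then show ?thesis by blast
  qed
  finally show ?thesis by simp
qed

abbreviation PL :: "'a \<Rightarrow> 'a set" where "PL x \<equiv> principal_left_ideal x"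

lemma pl_iff: "y \<in> PL x \<longleftrightarrow> (\<exists>r. y = r * x)"
  unfolding principal_left_ideal_def by auto
lemma pl_self: "x \<in> PL x"
  unfolding pl_iff by (rule exI[of _ 1]) simp
lemma pl_mult: "y \<in> PL x \<Longrightarrow> r * y \<in> PL x"
proof -
  assume "y \<in> PL x"
  then obtain s where "y = s * x" unfolding pl_iff by blast
  then have "r * y = (r * s) * x" by (simp add: mult.assoc)
  then show ?thesis unfolding pl_iff by blast
qed

lemma pl_add: "y \<in> PL x \<Longrightarrow> z \<in> PL x \<Longrightarrow> y + z \<in> PL x"
proof -
  assume "y \<in> PL x" "z \<in> PL x"
  then obtain s s' where "y = s * x" "z = s' * x" unfolding pl_iff by blast
  then have "y + z = (s + s') * x" by (simp add: distrib_right)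
  then show ?thesis unfolding pl_iff by blast
qed
lemma pl_diff: "y \<in> PL x \<Longrightarrow> z \<in> PL x \<Longrightarrow> y - z \<in> PL x"
proof -
  assume "y \<in> PL x" "z \<in> PL x"
  then obtain s s' where "y = s * x" "z = s' * x" unfolding pl_iff by blast
  then have "y - z = (s - s') * x" by (simp add: left_diff_distrib)
  then show ?thesis unfolding pl_iff by blast
qed
lemma pl_sub: "y \<in> PL x \<Longrightarrow> PL y \<subseteq> PL x"
proof
  fix z assume "y \<in> PL x" "z \<in> PL y"
  then obtain s where "z = s * y" unfolding pl_iff by blast
  then show "z \<in> PL x" using pl_mult \<open>y \<in> PL x\<close> by simp
qed
lemma pl_eq: "y \<in> PL x \<Longrightarrow> x \<in> PL y \<Longrightarrow> PL y = PL x"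
  by (intro subset_antisym pl_sub)
lemma pl_fin: "finite (PL x)"
  using fin by (meson finite_subset subset_UNIV)
lemma pl_zero: "0 \<in> PL x"
proof -
  have "0 * x \<in> PL x" by (rule pl_mult[OF pl_self])
  then show ?thesis by simp
qed

lemma finsum_delta:
  fixes p n :: nat
  assumes "ring R" "p < n" "\<And>l. l < n \<Longrightarrow> h l \<in> carrier R"
  shows "(\<Oplus>\<^bsub>R\<^esub> l\<in>{..<n}. if l = p then h l else \<zero>\<^bsub>R\<^esub>) = h p"
proof -
  interpret R: ring R by fact
  have "h \<in> {..<n} \<rightarrow> carrier R" using assms(3) by auto
  then show ?thesis using R.add.finprod_singleton_swap[of p "{..<n}" h, OF _ finite_lessThan] assms(2) by simp
qed

lemma phi_zero_row:
  assumes "i < t" "j < m i" "k < m i" "\<And>l. l < m i \<Longrightarrow> \<phi> r i j l = \<zero>\<^bsub>K i\<^esub>"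
  shows "\<phi> (r * w) i j k = \<zero>\<^bsub>K i\<^esub>"
proof -
  interpret R: ring "K i" using ringK assms by blast
  have "\<phi> (r * w) i j k = (\<Oplus>\<^bsub>K i\<^esub> l\<in>{..<m i}. \<zero>\<^bsub>K i\<^esub>)"
    unfolding phi_mult[OF assms(1-3)]
    apply (rule R.finsum_cong')
    using assms phi_carr by auto
  then show ?thesis by simp
qed

lemma exists_unit:
  assumes "i < t" "p < m i" "p' < m i" "\<gamma> \<in> carrier (K i)"
  obtains n where "\<forall>i'<t. \<forall>j<m i'. \<forall>k<m i'.
      \<phi> n i' j k = (if i' = i \<and> j = p \<and> k = p' then \<gamma> else \<zero>\<^bsub>K i'\<^esub>)"
proof -
  have "\<exists>x. \<forall>i'<t. \<forall>j<m i'. \<forall>k<m i'.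
      \<phi> x i' j k = (if i' = i \<and> j = p \<and> k = p' then \<gamma> else \<zero>\<^bsub>K i'\<^esub>)"
  proof (rule phi_surj)
    fix i' j k assume "i' < t"
    then have "\<zero>\<^bsub>K i'\<^esub> \<in> carrier (K i')" using ringK ring.ring_simprules(2) by blast
    then show "(if i' = i \<and> j = p \<and> k = p' then \<gamma> else \<zero>\<^bsub>K i'\<^esub>) \<in> carrier (K i')"
      using assms(4) by auto
  qed
  then show ?thesis using that by blast
qed

context
  fixes n i p p' \<gamma>
  assumes it: "i < t" and pm: "p < m i" and p'm: "p' < m i" and \<gamma>c: "\<gamma> \<in> carrier (K i)"
    and nd: "\<forall>i'<t. \<forall>j<m i'. \<forall>k<m i'.
      \<phi> n i' j k = (if i' = i \<and> j = p \<and> k = p' then \<gamma> else \<zero>\<^bsub>K i'\<^esub>)"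
begin

lemma unit_mult_i:
  assumes "j < m i" "k < m i"
  shows "\<phi> (n * z) i j k = (if j = p then \<gamma> \<otimes>\<^bsub>K i\<^esub> \<phi> z i p' k else \<zero>\<^bsub>K i\<^esub>)"
proof -
  interpret R: ring "K i" using ringK it by blast
  have "\<phi> (n * z) i j k = (\<Oplus>\<^bsub>K i\<^esub> l\<in>{..<m i}. if l = p' then
          (if j = p then \<gamma> \<otimes>\<^bsub>K i\<^esub> \<phi> z i l k else \<zero>\<^bsub>K i\<^esub>) else \<zero>\<^bsub>K i\<^esub>)"
    unfolding phi_mult[OF it assms]
  proof (rule R.finsum_cong')
    show "(\<lambda>l. if l = p' then (if j = p then \<gamma> \<otimes>\<^bsub>K i\<^esub> \<phi> z i l k else \<zero>\<^bsub>K i\<^esub>)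
           else \<zero>\<^bsub>K i\<^esub>) \<in> {..<m i} \<rightarrow> carrier (K i)"
      using \<gamma>c phi_carr[OF it] assms by auto
  next
    fix l assume l: "l \<in> {..<m i}"
    have z: "\<phi> z i l k \<in> carrier (K i)" using phi_carr[OF it] l assms by auto
    show "\<phi> n i j l \<otimes>\<^bsub>K i\<^esub> \<phi> z i l k = (if l = p' then
          (if j = p then \<gamma> \<otimes>\<^bsub>K i\<^esub> \<phi> z i l k else \<zero>\<^bsub>K i\<^esub>) else \<zero>\<^bsub>K i\<^esub>)"
      using nd it assms l z by auto
  qed simp
  also have "\<dots> = (if j = p then \<gamma> \<otimes>\<^bsub>K i\<^esub> \<phi> z i p' k else \<zero>\<^bsub>K i\<^esub>)"
    apply (rule finsum_delta[OF R.ring_axioms p'm])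
    using phi_carr[OF it] assms \<gamma>c by auto
  finally show ?thesis .
qed

lemma unit_mult_other:
  assumes "i' < t" "i' \<noteq> i" "j < m i'" "k < m i'"
  shows "\<phi> (n * z) i' j k = \<zero>\<^bsub>K i'\<^esub>"
  by (rule phi_zero_row) (use assms nd in auto)

lemma unit_sq:
  assumes "p \<noteq> p'"
  shows "f (n * n * z) = 0"
proof -
  have "\<phi> (n * n) i' j k = \<zero>\<^bsub>K i'\<^esub>" if "i' < t" "j < m i'" "k < m i'" for i' j k
  proof (cases "i' = i")
    case True
    interpret R: ring "K i" using ringK it by blast
    have "\<phi> n i p' k = \<zero>\<^bsub>K i\<^esub>" using nd it p'm that True assms by auto
    then show ?thesis using unit_mult_i[of j k n] that True \<gamma>c by auto
  next
    case False
    then show ?thesis using unit_mult_other that by blast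
  qed
  then have "\<phi> (n * n * z) i' j k = \<zero>\<^bsub>K i'\<^esub>" if "i' < t" "j < m i'" "k < m i'" for i' j k
    using phi_zero_row that by blast
  then show ?thesis using phi_ker by blast
qed

end

definition \<tau> where "\<tau> i w = (\<Oplus>\<^bsub>K i\<^esub> j\<in>{..<m i}. \<phi> w i j j)"

lemma tau_carr: "i < t \<Longrightarrow> \<tau> i w \<in> carrier (K i)"
proof -
  assume it: "i < t"
  interpret R: ring "K i" using ringK it by blast
  show ?thesis unfolding \<tau>_def by (rule R.finsum_closed) (use phi_carr[OF it] in auto)
qed

lemma tau_add: "i < t \<Longrightarrow> \<tau> i (w + w') = \<tau> i w \<oplus>\<^bsub>K i\<^esub> \<tau> i w'"
proof -
  assume it: "i < t"
  interpret R: ring "K i" using ringK it by blast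
  have "(\<Oplus>\<^bsub>K i\<^esub> j\<in>{..<m i}. \<phi> (w + w') i j j) =
        (\<Oplus>\<^bsub>K i\<^esub> j\<in>{..<m i}. \<phi> w i j j \<oplus>\<^bsub>K i\<^esub> \<phi> w' i j j)"
    by (rule R.finsum_cong') (use phi_carr[OF it] phi_add[OF it] in auto)
  also have "\<dots> = \<tau> i w \<oplus>\<^bsub>K i\<^esub> \<tau> i w'"
    unfolding \<tau>_def by (rule R.finsum_addf) (use phi_carr[OF it] in auto)
  finally show ?thesis unfolding \<tau>_def .
qed

lemma tau_cong: "i < t \<Longrightarrow> f w = f w' \<Longrightarrow> \<tau> i w = \<tau> i w'"
proof -
  assume "i < t" "f w = f w'"
  then have e: "\<forall>j<m i. \<phi> w i j j = \<phi> w' i j j" using phi_eq_iff by blast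
  interpret R: ring "K i" using ringK \<open>i < t\<close> by blast
  show ?thesis unfolding \<tau>_def
    by (intro R.finsum_cong') (use e phi_carr \<open>i < t\<close> in auto)
qed

lemma tau_zero_comp: "i < t \<Longrightarrow> (\<And>j k. j < m i \<Longrightarrow> k < m i \<Longrightarrow> \<phi> w i j k = \<zero>\<^bsub>K i\<^esub>) \<Longrightarrow>
   \<tau> i w = \<zero>\<^bsub>K i\<^esub>"
proof -
  assume it: "i < t" and z: "\<And>j k. j < m i \<Longrightarrow> k < m i \<Longrightarrow> \<phi> w i j k = \<zero>\<^bsub>K i\<^esub>"
  interpret R: ring "K i" using ringK it by blast
  have "\<tau> i w = (\<Oplus>\<^bsub>K i\<^esub> j\<in>{..<m i}. \<zero>\<^bsub>K i\<^esub>)"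
    unfolding \<tau>_def by (rule R.finsum_cong') (use z in auto)
  then show ?thesis by simp
qed

lemma tau_unit_i:
  assumes it: "i < t" and pm: "p < m i" and p'm: "p' < m i" and \<gamma>c: "\<gamma> \<in> carrier (K i)"
    and nd: "\<forall>i'<t. \<forall>j<m i'. \<forall>k<m i'.
      \<phi> n i' j k = (if i' = i \<and> j = p \<and> k = p' then \<gamma> else \<zero>\<^bsub>K i'\<^esub>)"
  shows "\<tau> i (n * z) = \<gamma> \<otimes>\<^bsub>K i\<^esub> \<phi> z i p' p"
proof -
  interpret R: ring "K i" using ringK it by blast
  have "\<tau> i (n * z) = (\<Oplus>\<^bsub>K i\<^esub> j\<in>{..<m i}. if j = p then \<gamma> \<otimes>\<^bsub>K i\<^esub> \<phi> z i p' j else \<zero>\<^bsub>K i\<^esub>)"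
    unfolding \<tau>_def
    by (rule R.finsum_cong') (use unit_mult_i[OF assms] phi_carr[OF it] p'm \<gamma>c in auto)
  also have "\<dots> = \<gamma> \<otimes>\<^bsub>K i\<^esub> \<phi> z i p' p"
    by (rule finsum_delta[OF R.ring_axioms pm]) (use phi_carr[OF it] p'm \<gamma>c in auto)
  finally show ?thesis .
qed

lemma tau_unit_other:
  assumes it: "i < t" and pm: "p < m i" and p'm: "p' < m i" and \<gamma>c: "\<gamma> \<in> carrier (K i)"
    and nd: "\<forall>i'<t. \<forall>j<m i'. \<forall>k<m i'.
      \<phi> n i' j k = (if i' = i \<and> j = p \<and> k = p' then \<gamma> else \<zero>\<^bsub>K i'\<^esub>)"
    and i'': "i' < t" "i' \<noteq> i"
  shows "\<tau> i' (n * z) = \<zero>\<^bsub>K i'\<^esub>"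
  by (rule tau_zero_comp[OF i''(1)]) (rule unit_mult_other[OF assms])

definition g where "g i c = (if c = \<zero>\<^bsub>K i\<^esub> then 1 else -1 / (real (q i) - 1))"
definition \<Psi> where "\<Psi> w = (\<Prod>i<t. g i (\<tau> i w))"
definition \<psi> where "\<psi> y = (if y \<in> range f then \<Psi> (SOME w. f w = y) else 0)"

lemma Psi_cong: "f w = f w' \<Longrightarrow> \<Psi> w = \<Psi> w'"
  unfolding \<Psi>_def by (intro prod.cong refl) (simp add: tau_cong[of _ w w'])

lemma psi_f: "\<psi> (f w) = \<Psi> w"
proof -
  have "f (SOME w'. f w' = f w) = f w" by (rule someI) simp
  then have "\<Psi> (SOME w'. f w' = f w) = \<Psi> w" by (rule Psi_cong)
  then show ?thesis unfolding \<psi>_def by simp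
qed

lemma psi_nonrange: "y \<notin> range f \<Longrightarrow> \<psi> y = 0"
  unfolding \<psi>_def by simp


lemma q_ge2: "i < t \<Longrightarrow> q i \<ge> 2"
proof -
  assume it: "i < t"
  interpret R: field "K i" using fieldK it by blast
  have "{\<zero>\<^bsub>K i\<^esub>, \<one>\<^bsub>K i\<^esub>} \<subseteq> carrier (K i)" by simp
  then have "card {\<zero>\<^bsub>K i\<^esub>, \<one>\<^bsub>K i\<^esub>} \<le> card (carrier (K i))"
    using finK[OF it] by (rule card_mono[rotated])
  then show ?thesis using cardK[OF it] by simp
qed

lemma g_abs: "i < t \<Longrightarrow> \<bar>g i c\<bar> \<le> 1"
proof -
  assume "i < t"
  then have "real (q i) \<ge> 2" using q_ge2 by simp
  then show ?thesis unfolding g_def by (simp add: abs_div)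
qed

lemma Psi_abs: "\<bar>\<Psi> w\<bar> \<le> 1"
proof -
  have "(\<Prod>i<t. \<bar>g i (\<tau> i w)\<bar>) \<le> (\<Prod>i<t. (1::real))"
    by (rule prod_mono) (use g_abs in auto)
  then show ?thesis unfolding \<Psi>_def abs_prod by simp
qed

lemma psi_abs: "\<bar>\<psi> y\<bar> \<le> 1"
  unfolding \<psi>_def using Psi_abs by auto

lemma psi0: "\<psi> 0 = 1"
proof -
  have "\<tau> i 0 = \<zero>\<^bsub>K i\<^esub>" if "i < t" for i
    by (rule tau_zero_comp[OF that]) (use phi0 that in auto)
  then have "\<Psi> 0 = 1" unfolding \<Psi>_def g_def by simp
  then show ?thesis using psi_f[of 0] f0 by simp
qed

lemma g_sum: "i < t \<Longrightarrow> (\<Sum>c\<in>carrier (K i). g i c) = 0"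
proof -
  assume it: "i < t"
  interpret R: field "K i" using fieldK it by blast
  have fin: "finite (carrier (K i))" using finK it by blast
  have q2: "real (q i) \<ge> 2" using q_ge2 it by simp
  have "(\<Sum>c\<in>carrier (K i). g i c) = g i \<zero>\<^bsub>K i\<^esub> + (\<Sum>c\<in>carrier (K i) - {\<zero>\<^bsub>K i\<^esub>}. g i c)"
    using fin by (simp add: sum.remove)
  also have "(\<Sum>c\<in>carrier (K i) - {\<zero>\<^bsub>K i\<^esub>}. g i c) =
      (\<Sum>c\<in>carrier (K i) - {\<zero>\<^bsub>K i\<^esub>}. -1 / (real (q i) - 1))"
    by (rule sum.cong) (auto simp: g_def)
  also have "\<dots> = (real (q i) - 1) * (-1 / (real (q i) - 1))"
    using fin cardK[OF it] q2 by (simp add: card_Diff_singleton of_nat_diff)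
  finally show ?thesis using q2 by (simp add: g_def)
qed

lemma g_sum_shift: "i < t \<Longrightarrow> u \<in> carrier (K i) \<Longrightarrow> (\<Sum>c\<in>carrier (K i). g i (u \<oplus>\<^bsub>K i\<^esub> c)) = 0"
proof -
  assume it: "i < t" and u: "u \<in> carrier (K i)"
  interpret R: ring "K i" using ringK it by blast
  have bij: "bij_betw (\<lambda>c. u \<oplus>\<^bsub>K i\<^esub> c) (carrier (K i)) (carrier (K i))"
  proof (rule bij_betwI[where g="\<lambda>c. \<ominus>\<^bsub>K i\<^esub> u \<oplus>\<^bsub>K i\<^esub> c"])
    show "(\<lambda>c. u \<oplus>\<^bsub>K i\<^esub> c) \<in> carrier (K i) \<rightarrow> carrier (K i)" using u by auto
    show "(\<lambda>c. \<ominus>\<^bsub>K i\<^esub> u \<oplus>\<^bsub>K i\<^esub> c) \<in> carrier (K i) \<rightarrow> carrier (K i)" using u by auto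
    show "\<ominus>\<^bsub>K i\<^esub> u \<oplus>\<^bsub>K i\<^esub> (u \<oplus>\<^bsub>K i\<^esub> x) = x" if "x \<in> carrier (K i)" for x
      using u that by (simp add: R.a_assoc[symmetric] R.l_neg)
    show "u \<oplus>\<^bsub>K i\<^esub> (\<ominus>\<^bsub>K i\<^esub> u \<oplus>\<^bsub>K i\<^esub> y) = y" if "y \<in> carrier (K i)" for y
      using u that by (simp add: R.a_assoc[symmetric] R.r_neg)
  qed
  have "(\<Sum>c\<in>carrier (K i). g i (u \<oplus>\<^bsub>K i\<^esub> c)) = (\<Sum>c\<in>carrier (K i). g i c)"
    using sum.reindex_bij_betw[OF bij, of "g i"] by simp
  then show ?thesis using g_sum[OF it] by simp
qed

lemma left_ideal_pl: "left_ideal (PL x)"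
  unfolding left_ideal_def using pl_zero pl_add pl_mult by blast


lemma exists_soc_elem:
  assumes "x \<noteq> 0"
  obtains y where "y \<in> PL x" "y \<in> range f" "y \<noteq> 0"
proof -
  define L where "L = {I. left_ideal I \<and> I \<noteq> {0} \<and> I \<subseteq> PL x}"
  have "PL x \<in> L" unfolding L_def using left_ideal_pl pl_self assms by auto
  then obtain I where I: "I \<in> L" and Imin: "\<forall>J. J \<in> L \<longrightarrow> card I \<le> card J"
    using ex_has_least_nat[of "\<lambda>I. I \<in> L" "PL x" card] by auto
  have finI: "finite I" using fin by (meson finite_subset subset_UNIV)
  have IL: "left_ideal I" "I \<noteq> {0}" "I \<subseteq> PL x" using I unfolding L_def by auto
  have "minimal_left_ideal I"
    unfolding minimal_left_ideal_def
  proof (intro conjI allI impI)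
    show "left_ideal I" "I \<noteq> {0}" using IL by auto
  next
    fix J assume J: "left_ideal J \<and> J \<subseteq> I"
    show "J = {0} \<or> J = I"
    proof (cases "J = {0}")
      case False
      then have "J \<in> L" using J IL unfolding L_def by auto
      then have "card I \<le> card J" using Imin by simp
      then have "J = I" using J finI card_seteq by metis
      then show ?thesis by simp
    qed simp
  qed
  then have "I \<subseteq> left_socle" unfolding left_socle_def by auto
  then have sub: "I \<subseteq> range f" using frange by simp
  have "\<exists>y\<in>I. y \<noteq> 0" using IL(1,2) unfolding left_ideal_def by auto
  then obtain y where "y \<in> I" "y \<noteq> 0" by auto
  then show ?thesis using that sub IL(3) by (meson subsetD)
qed

lemma range_f_add: "y \<in> range f \<Longrightarrow> z \<in> range f \<Longrightarrow> y + z \<in> range f"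
proof -
  assume "y \<in> range f" "z \<in> range f"
  then obtain a b where "y = f a" "z = f b" by blast
  then have "y + z = f (a + b)" by (simp add: fadd)
  then show ?thesis by simp
qed
lemma range_f_diff: "y \<in> range f \<Longrightarrow> z \<in> range f \<Longrightarrow> y - z \<in> range f"
proof -
  assume "y \<in> range f" "z \<in> range f"
  then obtain a b where "y = f a" "z = f b" by blast
  then have "y - z = f (a - b)" by (simp add: fminus)
  then show ?thesis by simp
qed

lemma sum_psi_zero:
  assumes "x \<noteq> 0" shows "(\<Sum>y\<in>PL x. \<psi> y) = 0"
proof -
  obtain y1 where y1: "y1 \<in> PL x" "y1 \<in> range f" "y1 \<noteq> 0"
    using exists_soc_elem[OF assms] by blast
  obtain w1 where w1: "y1 = f w1" using y1 by blast
  have "\<not>(\<forall>i<t. \<forall>j<m i. \<forall>k<m i. \<phi> w1 i j k = \<zero>\<^bsub>K i\<^esub>)" using phi_ker w1 y1 by simp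
  then obtain i0 l k where i0: "i0 < t" "l < m i0" "k < m i0" "\<phi> w1 i0 l k \<noteq> \<zero>\<^bsub>K i0\<^esub>" by auto
  interpret R: field "K i0" using fieldK i0 by blast
  define a where "a = \<phi> w1 i0 l k"
  have ac: "a \<in> carrier (K i0)" unfolding a_def using phi_carr i0 by auto
  have aU: "a \<in> Units (K i0)" using R.field_Units ac i0(4) a_def by auto
  have "\<forall>c\<in>carrier (K i0). \<exists>n. \<forall>i'<t. \<forall>j<m i'. \<forall>k'<m i'.
      \<phi> n i' j k' = (if i' = i0 \<and> j = k \<and> k' = l then c \<otimes>\<^bsub>K i0\<^esub> inv\<^bsub>K i0\<^esub> a else \<zero>\<^bsub>K i'\<^esub>)"
  proof
    fix c assume c: "c \<in> carrier (K i0)"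
    have "c \<otimes>\<^bsub>K i0\<^esub> inv\<^bsub>K i0\<^esub> a \<in> carrier (K i0)" using c aU by simp
    then obtain n where "\<forall>i'<t. \<forall>j<m i'. \<forall>k'<m i'.
      \<phi> n i' j k' = (if i' = i0 \<and> j = k \<and> k' = l then c \<otimes>\<^bsub>K i0\<^esub> inv\<^bsub>K i0\<^esub> a else \<zero>\<^bsub>K i'\<^esub>)"
      using exists_unit[OF i0(1) i0(3) i0(2)] by blast
    then show "\<exists>n. \<forall>i'<t. \<forall>j<m i'. \<forall>k'<m i'.
      \<phi> n i' j k' = (if i' = i0 \<and> j = k \<and> k' = l then c \<otimes>\<^bsub>K i0\<^esub> inv\<^bsub>K i0\<^esub> a else \<zero>\<^bsub>K i'\<^esub>)" by blast
  qed
  then obtain N where N: "\<And>c. c \<in> carrier (K i0) \<Longrightarrow> \<forall>i'<t. \<forall>j<m i'. \<forall>k'<m i'.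
      \<phi> (N c) i' j k' = (if i' = i0 \<and> j = k \<and> k' = l then c \<otimes>\<^bsub>K i0\<^esub> inv\<^bsub>K i0\<^esub> a else \<zero>\<^bsub>K i'\<^esub>)"
    using bchoice[of "carrier (K i0)"] by metis
  define T where "T c = f (N c * w1)" for c
  define S where "S = PL x \<inter> range f"
  have T_in: "T c \<in> S" if "c \<in> carrier (K i0)" for c
  proof -
    have "T c = N c * y1" unfolding T_def w1 by (rule fmul)
    moreover have "T c \<in> range f" unfolding T_def by simp
    ultimately show ?thesis unfolding S_def using pl_mult[OF y1(1)] by auto
  qed
  have tau_T: "\<tau> i0 (N c * w1) = c" if c: "c \<in> carrier (K i0)" for c
  proof -
    have "\<tau> i0 (N c * w1) = (c \<otimes>\<^bsub>K i0\<^esub> inv\<^bsub>K i0\<^esub> a) \<otimes>\<^bsub>K i0\<^esub> \<phi> w1 i0 l k"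
      by (rule tau_unit_i[OF i0(1) i0(3) i0(2) _ N[OF c]]) (use c aU in simp)
    also have "\<dots> = c" unfolding a_def[symmetric] using c aU ac
      by (simp add: R.m_assoc R.Units_l_inv)
    finally show ?thesis .
  qed
  have tau_T': "\<tau> i' (N c * w1) = \<zero>\<^bsub>K i'\<^esub>" if c: "c \<in> carrier (K i0)" and "i' < t" "i' \<noteq> i0" for c i'
    by (rule tau_unit_other[OF i0(1) i0(3) i0(2) _ N[OF c]]) (use c aU that in simp_all)
  have finS: "finite S" using fin by (meson finite_subset subset_UNIV)
  have sum1: "(\<Sum>y\<in>PL x. \<psi> y) = (\<Sum>y\<in>S. \<psi> y)"
    by (rule sum.mono_neutral_right) (auto simp: S_def pl_fin psi_nonrange)
  have shift: "(\<Sum>y\<in>S. \<psi> (y + T c)) = (\<Sum>y\<in>S. \<psi> y)" if c: "c \<in> carrier (K i0)" for c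
  proof -
    have bij: "bij_betw (\<lambda>y. y + T c) S S"
    proof (rule bij_betwI[where g="\<lambda>y. y - T c"])
      show "(\<lambda>y. y + T c) \<in> S \<rightarrow> S" using T_in[OF c] pl_add range_f_add unfolding S_def by auto
      show "(\<lambda>y. y - T c) \<in> S \<rightarrow> S" using T_in[OF c] pl_diff range_f_diff unfolding S_def by auto
    qed auto
    show ?thesis using sum.reindex_bij_betw[OF bij, of \<psi>] by simp
  qed
  have inner: "(\<Sum>c\<in>carrier (K i0). \<psi> (y + T c)) = 0" if y: "y \<in> S" for y
  proof -
    obtain w where w: "y = f w" using y unfolding S_def by blast
    define P where "P = (\<Prod>i\<in>{..<t} - {i0}. g i (\<tau> i w \<oplus>\<^bsub>K i\<^esub> \<zero>\<^bsub>K i\<^esub>))"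
    have "\<psi> (y + T c) = g i0 (\<tau> i0 w \<oplus>\<^bsub>K i0\<^esub> c) * P" if c: "c \<in> carrier (K i0)" for c
    proof -
      have "y + T c = f (w + N c * w1)" unfolding w T_def by (simp add: fadd)
      then have "\<psi> (y + T c) = \<Psi> (w + N c * w1)" by (simp add: psi_f)
      also have "\<dots> = (\<Prod>i<t. g i (\<tau> i w \<oplus>\<^bsub>K i\<^esub> \<tau> i (N c * w1)))"
        unfolding \<Psi>_def by (intro prod.cong refl) (simp add: tau_add)
      also have "\<dots> = g i0 (\<tau> i0 w \<oplus>\<^bsub>K i0\<^esub> \<tau> i0 (N c * w1)) *
          (\<Prod>i\<in>{..<t} - {i0}. g i (\<tau> i w \<oplus>\<^bsub>K i\<^esub> \<tau> i (N c * w1)))"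
        by (rule prod.remove) (use i0 in auto)
      also have "(\<Prod>i\<in>{..<t} - {i0}. g i (\<tau> i w \<oplus>\<^bsub>K i\<^esub> \<tau> i (N c * w1))) = P"
        unfolding P_def by (intro prod.cong refl) (use tau_T'[OF c] in auto)
      finally show ?thesis using tau_T[OF c] by simp
    qed
    then have "(\<Sum>c\<in>carrier (K i0). \<psi> (y + T c)) = (\<Sum>c\<in>carrier (K i0). g i0 (\<tau> i0 w \<oplus>\<^bsub>K i0\<^esub> c)) * P"
      by (simp add: sum_distrib_right)
    also have "\<dots> = 0" using g_sum_shift[OF i0(1) tau_carr[OF i0(1)]] by simp
    finally show ?thesis .
  qed
  have "real (card (carrier (K i0))) * (\<Sum>y\<in>S. \<psi> y) = (\<Sum>c\<in>carrier (K i0). \<Sum>y\<in>S. \<psi> y)"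
    by simp
  also have "\<dots> = (\<Sum>c\<in>carrier (K i0). \<Sum>y\<in>S. \<psi> (y + T c))"
    by (rule sum.cong) (simp_all add: shift)
  also have "\<dots> = (\<Sum>y\<in>S. \<Sum>c\<in>carrier (K i0). \<psi> (y + T c))"
    by (rule sum.swap)
  also have "\<dots> = 0" by (simp add: inner)
  finally have "real (card (carrier (K i0))) * (\<Sum>y\<in>S. \<psi> y) = 0" .
  moreover have "card (carrier (K i0)) \<noteq> 0" using cardK q_ge2 i0(1) by fastforce
  ultimately show ?thesis using sum1 by simp
qed

definition C where "C x = {y. PL y = PL x}"
definition \<psi>b where "\<psi>b x = (\<Sum>y\<in>C x. \<psi> y) / real (card (C x))"

lemma C_self: "x \<in> C x" unfolding C_def by simp
lemma C_sub: "C x \<subseteq> PL x" unfolding C_def using pl_self by auto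
lemma C_fin: "finite (C x)" using fin by (meson finite_subset subset_UNIV)
lemma C_card: "card (C x) > 0" using C_fin C_self card_gt_0_iff by blast
lemma C_eq: "y \<in> C x \<Longrightarrow> C y = C x" unfolding C_def by simp
lemma C_sym: "y \<in> C x \<longleftrightarrow> x \<in> C y" unfolding C_def by auto

lemma avg_sum: "(\<Sum>y\<in>PL x. \<psi>b y) = (\<Sum>y\<in>PL x. \<psi> y)"
proof -
  let ?A = "PL x"
  have sub: "C y \<subseteq> ?A" if "y \<in> ?A" for y using C_sub pl_sub[OF that] by blast
  have "(\<Sum>y\<in>?A. \<psi>b y) = (\<Sum>y\<in>?A. \<Sum>y'\<in>?A. if y' \<in> C y then \<psi> y' / real (card (C y)) else 0)"
  proof (rule sum.cong[OF refl])
    fix y assume y: "y \<in> ?A"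
    have "(\<Sum>y'\<in>?A. if y' \<in> C y then \<psi> y' / real (card (C y)) else 0) =
          (\<Sum>y'\<in>?A \<inter> C y. \<psi> y' / real (card (C y)))"
      using pl_fin by (simp add: sum.inter_restrict)
    also have "?A \<inter> C y = C y" using sub[OF y] by blast
    finally show "\<psi>b y = (\<Sum>y'\<in>?A. if y' \<in> C y then \<psi> y' / real (card (C y)) else 0)"
      unfolding \<psi>b_def by (simp add: sum_divide_distrib)
  qed
  also have "\<dots> = (\<Sum>y'\<in>?A. \<Sum>y\<in>?A. if y' \<in> C y then \<psi> y' / real (card (C y)) else 0)"
    by (rule sum.swap)
  also have "\<dots> = (\<Sum>y'\<in>?A. \<psi> y')"
  proof (rule sum.cong[OF refl])
    fix y' assume y': "y' \<in> ?A"
    have "(\<Sum>y\<in>?A. if y' \<in> C y then \<psi> y' / real (card (C y)) else 0) =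
          (\<Sum>y\<in>?A. if y \<in> C y' then \<psi> y' / real (card (C y')) else 0)"
    proof (rule sum.cong[OF refl])
      fix y assume "y \<in> ?A"
      show "(if y' \<in> C y then \<psi> y' / real (card (C y)) else 0) =
          (if y \<in> C y' then \<psi> y' / real (card (C y')) else 0)"
      proof (cases "y \<in> C y'")
        case True
        then show ?thesis using C_sym[of y' y] C_eq[OF True] by simp
      next
        case False
        then show ?thesis using C_sym[of y' y] by simp
      qed
    qed
    also have "\<dots> = (\<Sum>y\<in>?A \<inter> C y'. \<psi> y' / real (card (C y')))"
      by (simp only: sum.inter_restrict[OF pl_fin])
    also have "?A \<inter> C y' = C y'" using sub[OF y'] by blast
    also have "(\<Sum>y\<in>C y'. \<psi> y' / real (card (C y'))) = \<psi> y'"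
      using C_card[of y'] by simp
    finally show "(\<Sum>y\<in>?A. if y' \<in> C y then \<psi> y' / real (card (C y)) else 0) = \<psi> y'" .
  qed
  finally show ?thesis .
qed


lemma PL0: "PL 0 = {0}"
  unfolding principal_left_ideal_def by auto

lemma C0: "C 0 = {0}"
proof -
  have "y = 0" if "PL y = PL 0" for y using pl_self[of y] that PL0 by auto
  then show ?thesis unfolding C_def by auto
qed


lemma omega_formula:
  assumes hw: "normalized_homogeneous_weight \<omega>"
  shows "\<omega> x = 1 - \<psi>b x"
proof -
  have H: "\<omega> 0 = 0 \<and> (\<forall>x y. PL x = PL y \<longrightarrow> \<omega> x = \<omega> y) \<and>
      (\<forall>x. x \<noteq> 0 \<longrightarrow> (\<Sum>y\<in>PL x. \<omega> y) = real (card (PL x)))"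
      using hw unfolding normalized_homogeneous_weight_def by assumption
  have w0: "\<omega> 0 = 0" using H by (rule conjunct1)
  have winv': "\<forall>x y. PL x = PL y \<longrightarrow> \<omega> x = \<omega> y" using H by (rule conjunct2[THEN conjunct1])
  have wsum': "\<forall>x. x \<noteq> 0 \<longrightarrow> (\<Sum>y\<in>PL x. \<omega> y) = real (card (PL x))"
    using H by (rule conjunct2[THEN conjunct2])
  note winv = winv'[rule_format] and wsum = wsum'[rule_format]
  define d where "d y = \<omega> y - 1 + \<psi>b y" for y
  have "d x = 0"
  proof (induction "card (PL x)" arbitrary: x rule: less_induct)
    case less
    show ?case
    proof (cases "x = 0")
      case True
      then show ?thesis unfolding d_def \<psi>b_def using C0 w0 psi0 by simp
    next
      case False
      have "(\<Sum>y\<in>PL x. d y) = (\<Sum>y\<in>PL x. \<omega> y) - real (card (PL x)) + (\<Sum>y\<in>PL x. \<psi>b y)"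
        unfolding d_def by (simp add: sum.distrib sum_subtractf)
      also have "\<dots> = 0" using wsum[OF False] avg_sum sum_psi_zero[OF False] by simp
      finally have s0: "(\<Sum>y\<in>PL x. d y) = 0" .
      have "(\<Sum>y\<in>PL x. d y) = (\<Sum>y\<in>C x. d y) + (\<Sum>y\<in>PL x - C x. d y)"
        using sum.subset_diff[OF C_sub pl_fin, of d x] by simp
      also have "(\<Sum>y\<in>PL x - C x. d y) = 0"
      proof (rule sum.neutral, rule ballI)
        fix y assume y: "y \<in> PL x - C x"
        then have "PL y \<subseteq> PL x" "PL y \<noteq> PL x" using pl_sub unfolding C_def by auto
        then have "card (PL y) < card (PL x)" using pl_fin by (simp add: psubset_card_mono)
        then show "d y = 0" by (rule less)
      qed
      also have "(\<Sum>y\<in>C x. d y) = (\<Sum>y\<in>C x. d x)"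
      proof (rule sum.cong[OF refl])
        fix y assume y: "y \<in> C x"
        then have "PL y = PL x" unfolding C_def by simp
        then have "\<omega> y = \<omega> x" by (rule winv)
        moreover have "\<psi>b y = \<psi>b x" unfolding \<psi>b_def using C_eq[OF y] by simp
        ultimately show "d y = d x" unfolding d_def by simp
      qed
      finally have "real (card (C x)) * d x = 0" using s0 by simp
      then show ?thesis using C_card[of x] by simp
    qed
  qed
  then show ?thesis unfolding d_def by simp
qed

lemma C_shift:
  assumes "f (n * n * z) = 0"
  shows "f (z + n * z) \<in> C (f z)"
proof -
  let ?y = "f (z + n * z)"
  have y: "?y = f z + n * f z" by (simp add: fadd fmul)
  have "?y \<in> PL (f z)" unfolding y using pl_add[OF pl_self pl_mult[OF pl_self]] by blast
  moreover have "n * ?y = n * f z"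
  proof -
    have "n * (n * f z) = f (n * n * z)" by (simp add: fmul mult.assoc)
    then show ?thesis unfolding y using assms by (simp add: distrib_left)
  qed
  then have "f z = ?y - n * ?y" unfolding y by simp
  then have "f z \<in> PL ?y" using pl_diff[OF pl_self pl_mult[OF pl_self]] by metis
  ultimately show ?thesis unfolding C_def using pl_eq by blast
qed

lemma C_scale:
  assumes "f (s * (r * z)) = f z"
  shows "f (r * z) \<in> C (f z)"
proof -
  have "f (r * z) \<in> PL (f z)" using pl_mult[OF pl_self] by (simp add: fmul)
  moreover have "f z \<in> PL (f (r * z))"
  proof -
    have "s * f (r * z) \<in> PL (f (r * z))" by (rule pl_mult[OF pl_self])
    moreover have "s * f (r * z) = f z" using assms by (simp add: fmul)
    ultimately show ?thesis by simp
  qed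
  ultimately show ?thesis unfolding C_def using pl_eq by blast
qed

lemma diag_mult:
  assumes "i < t" "j < m i" "k < m i"
    and "\<And>j l. j < m i \<Longrightarrow> l < m i \<Longrightarrow> \<phi> r i j l = (if j = l then \<one>\<^bsub>K i\<^esub> else \<zero>\<^bsub>K i\<^esub>)"
  shows "\<phi> (r * w) i j k = \<phi> w i j k"
proof -
  interpret R: ring "K i" using ringK assms by blast
  have "\<phi> (r * w) i j k = (\<Oplus>\<^bsub>K i\<^esub> l\<in>{..<m i}. if l = j then \<phi> w i l k else \<zero>\<^bsub>K i\<^esub>)"
    unfolding phi_mult[OF assms(1-3)]
    by (rule R.finsum_cong') (use assms phi_carr in auto)
  also have "\<dots> = \<phi> w i j k"
    by (rule finsum_delta[OF R.ring_axioms assms(2)]) (use assms phi_carr in auto)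
  finally show ?thesis .
qed

lemma m1_mult:
  assumes "i < t" "m i = 1"
  shows "\<phi> (r * w) i 0 0 = \<phi> r i 0 0 \<otimes>\<^bsub>K i\<^esub> \<phi> w i 0 0"
proof -
  interpret R: ring "K i" using ringK assms by blast
  have "{..<m i} = {0}" using assms by auto
  then show ?thesis using phi_mult[OF assms(1), of 0 0 r w] assms phi_carr[OF assms(1)] by simp
qed

lemma tau_m1:
  assumes "i < t" "m i = 1"
  shows "\<tau> i w = \<phi> w i 0 0"
proof -
  interpret R: ring "K i" using ringK assms by blast
  have "{..<m i} = {0}" using assms by auto
  then show ?thesis unfolding \<tau>_def using assms phi_carr[OF assms(1)] by simp
qed

lemma Psi_split:
  assumes "i < t"
  shows "\<Psi> w = g i (\<tau> i w) * (\<Prod>i'\<in>{..<t} - {i}. g i' (\<tau> i' w))"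
  unfolding \<Psi>_def by (rule prod.remove) (use assms in auto)

lemma prod_rest_abs: "\<bar>\<Prod>i'\<in>A. g i' (\<tau> i' w)\<bar> \<le> 1" if "A \<subseteq> {..<t}"
proof -
  have "(\<Prod>i'\<in>A. \<bar>g i' (\<tau> i' w)\<bar>) \<le> (\<Prod>i'\<in>A. (1::real))"
    by (rule prod_mono) (use g_abs that in auto)
  then show ?thesis unfolding abs_prod by simp
qed

lemma carrier2:
  assumes "i < t" "q i = 2"
  shows "carrier (K i) = {\<zero>\<^bsub>K i\<^esub>, \<one>\<^bsub>K i\<^esub>}"
proof -
  interpret R: field "K i" using fieldK assms by blast
  have sub: "{\<zero>\<^bsub>K i\<^esub>, \<one>\<^bsub>K i\<^esub>} \<subseteq> carrier (K i)" by simp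
  have "card {\<zero>\<^bsub>K i\<^esub>, \<one>\<^bsub>K i\<^esub>} = card (carrier (K i))" using cardK assms by simp
  then show ?thesis using card_seteq[OF finK[OF assms(1)] sub] by simp
qed

lemma two_vals:
  assumes it: "i < t" and p1: "\<Psi> w1 = 1" and p2: "\<Psi> w2 = 1"
    and ne: "\<tau> i w1 \<noteq> \<tau> i w2" and eq: "\<And>i'. i' < t \<Longrightarrow> i' \<noteq> i \<Longrightarrow> \<tau> i' w1 = \<tau> i' w2"
  shows False
proof -
  define P where "P = (\<Prod>i'\<in>{..<t} - {i}. g i' (\<tau> i' w1))"
  have P2: "P = (\<Prod>i'\<in>{..<t} - {i}. g i' (\<tau> i' w2))"
    unfolding P_def by (rule prod.cong) (use eq in auto)
  have e1: "g i (\<tau> i w1) * P = 1" using p1 Psi_split[OF it, of w1] P_def by simp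
  have e2: "g i (\<tau> i w2) * P = 1" using p2 Psi_split[OF it, of w2] P2 by simp
  have Pabs: "\<bar>P\<bar> \<le> 1" unfolding P_def by (rule prod_rest_abs) auto
  have q2: "real (q i) \<ge> 2" using q_ge2 it by simp
  have geq: "g i (\<tau> i w1) = g i (\<tau> i w2)" using e1 e2 by (metis mult_cancel_right mult_zero_left zero_neq_one)
  show False
  proof (cases "\<tau> i w1 = \<zero>\<^bsub>K i\<^esub> \<or> \<tau> i w2 = \<zero>\<^bsub>K i\<^esub>")
    case True
    then have "g i (\<tau> i w1) \<noteq> g i (\<tau> i w2)" using ne q2 unfolding g_def
      by (auto simp: divide_simps)
    then show False using geq by simp
  next
    case False
    then have gv: "g i (\<tau> i w1) = -1 / (real (q i) - 1)" unfolding g_def by simp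
    have "\<bar>-1 / (real (q i) - 1) * P\<bar> = 1" using e1 gv by simp
    then have "\<bar>P\<bar> = real (q i) - 1" using q2 by (simp add: abs_mult abs_div divide_simps)
    then have "q i = 2" using Pabs q2 by linarith
    then have "carrier (K i) = {\<zero>\<^bsub>K i\<^esub>, \<one>\<^bsub>K i\<^esub>}" using carrier2 it by blast
    then show False using False ne tau_carr[OF it, of w1] tau_carr[OF it, of w2] by auto
  qed
qed

lemma psi_one_on_class:
  assumes hw: "normalized_homogeneous_weight \<omega>" and w: "\<omega> x = 0"
  shows "\<forall>y\<in>C x. \<psi> y = 1"
proof -
  have "\<psi>b x = 1" using omega_formula[OF hw, of x] w by simp
  then have s: "(\<Sum>y\<in>C x. \<psi> y) = real (card (C x))" unfolding \<psi>b_def using C_card[of x] by simp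
  have "(\<Sum>y\<in>C x. 1 - \<psi> y) = real (card (C x)) - (\<Sum>y\<in>C x. \<psi> y)"
    by (simp add: sum_subtractf)
  then have z: "(\<Sum>y\<in>C x. 1 - \<psi> y) = 0" using s by simp
  have nn: "\<And>y. y \<in> C x \<Longrightarrow> 0 \<le> 1 - \<psi> y" using psi_abs abs_le_D1 by fastforce
  have "\<forall>y\<in>C x. 1 - \<psi> y = 0" using sum_nonneg_eq_0_iff[OF C_fin, where f="\<lambda>y. 1 - \<psi> y"] nn z by simp
  then show ?thesis by simp
qed

lemma offdiag_contra:
  assumes one: "\<forall>y\<in>C x. \<psi> y = 1" and z': "f z' \<in> C x"
    and it: "i < t" and lk: "l' < m i" "k' < m i" "l' \<noteq> k'" and nz: "\<phi> z' i l' k' \<noteq> \<zero>\<^bsub>K i\<^esub>"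
  shows False
proof -
  interpret R: ring "K i" using ringK it by blast
  obtain n where nd: "\<forall>i'<t. \<forall>j<m i'. \<forall>k<m i'.
      \<phi> n i' j k = (if i' = i \<and> j = k' \<and> k = l' then \<one>\<^bsub>K i\<^esub> else \<zero>\<^bsub>K i'\<^esub>)"
    using exists_unit[OF it lk(2) lk(1), of "\<one>\<^bsub>K i\<^esub>"] by auto
  have sq: "f (n * n * z') = 0" by (rule unit_sq[OF it lk(2) lk(1) _ nd]) (use lk in auto)
  have Cz: "C (f z') = C x" using C_eq[OF z'] .
  have w2C: "f (z' + n * z') \<in> C x" using C_shift[OF sq] Cz by simp
  have ti: "\<tau> i (n * z') = \<one>\<^bsub>K i\<^esub> \<otimes>\<^bsub>K i\<^esub> \<phi> z' i l' k'"
    by (rule tau_unit_i[OF it lk(2) lk(1) _ nd]) simp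
  have a: "\<phi> z' i l' k' \<in> carrier (K i)" using phi_carr it lk by auto
  have ne: "\<tau> i z' \<noteq> \<tau> i (z' + n * z')"
  proof
    assume "\<tau> i z' = \<tau> i (z' + n * z')"
    then have "\<tau> i z' \<oplus>\<^bsub>K i\<^esub> \<phi> z' i l' k' = \<tau> i z'" using tau_add[OF it] ti a by simp
    then have "\<phi> z' i l' k' = \<zero>\<^bsub>K i\<^esub>" using R.add.l_cancel_one[OF tau_carr[OF it] a] by simp
    then show False using nz by simp
  qed
  have eq: "\<tau> i' z' = \<tau> i' (z' + n * z')" if "i' < t" "i' \<noteq> i" for i'
  proof -
    interpret R': ring "K i'" using ringK that by blast
    have "\<tau> i' (n * z') = \<zero>\<^bsub>K i'\<^esub>"
      by (rule tau_unit_other[OF it lk(2) lk(1) _ nd that]) simp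
    then have "\<tau> i' (z' + n * z') = \<tau> i' z' \<oplus>\<^bsub>K i'\<^esub> \<zero>\<^bsub>K i'\<^esub>"
      using tau_add[OF that(1)] by simp
    also have "\<dots> = \<tau> i' z'" using R'.r_zero[OF tau_carr[OF that(1)]] .
    finally show ?thesis by simp
  qed
  have "\<psi> (f z') = 1" using one z' by blast
  then have p1: "\<Psi> z' = 1" by (simp add: psi_f)
  have "\<psi> (f (z' + n * z')) = 1" using one w2C by blast
  then have p2: "\<Psi> (z' + n * z') = 1" by (simp add: psi_f)
  show False by (rule two_vals[OF it p1 p2 ne eq])
qed

lemma claimA:
  assumes one: "\<forall>y\<in>C (f z). \<psi> y = 1"
    and it: "i < t" and lk: "l < m i" "k < m i" and nz: "\<phi> z i l k \<noteq> \<zero>\<^bsub>K i\<^esub>"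
  shows "q i = 2 \<and> m i = 1"
proof (rule ccontr)
  assume nq: "\<not> (q i = 2 \<and> m i = 1)"
  interpret R: field "K i" using fieldK it by blast
  have zC: "f z \<in> C (f z)" by (rule C_self)
  show False
  proof (cases "\<exists>l'<m i. \<exists>k'<m i. l' \<noteq> k' \<and> \<phi> z i l' k' \<noteq> \<zero>\<^bsub>K i\<^esub>")
    case True
    then obtain l' k' where "l' < m i" "k' < m i" "l' \<noteq> k'" "\<phi> z i l' k' \<noteq> \<zero>\<^bsub>K i\<^esub>" by blast
    then show False using offdiag_contra[OF one zC it] by blast
  next
    case False
    then have diag: "\<And>l' k'. l' < m i \<Longrightarrow> k' < m i \<Longrightarrow> l' \<noteq> k' \<Longrightarrow> \<phi> z i l' k' = \<zero>\<^bsub>K i\<^esub>" by blast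
    have lk_eq: "l = k" using diag lk nz by blast
    show False
    proof (cases "m i \<ge> 2")
      case True
      define j where "j = (if k = 0 then 1 else 0::nat)"
      have j: "j < m i" "j \<noteq> k" unfolding j_def using True by auto
      obtain n where nd: "\<forall>i'<t. \<forall>j'<m i'. \<forall>k'<m i'.
          \<phi> n i' j' k' = (if i' = i \<and> j' = j \<and> k' = k then \<one>\<^bsub>K i\<^esub> else \<zero>\<^bsub>K i'\<^esub>)"
        using exists_unit[OF it j(1) lk(2), of "\<one>\<^bsub>K i\<^esub>"] by auto
      have sq: "f (n * n * z) = 0" by (rule unit_sq[OF it j(1) lk(2) _ nd]) (use j in auto)
      have z'C: "f (z + n * z) \<in> C (f z)" by (rule C_shift[OF sq])
      have akk: "\<phi> z i k k \<in> carrier (K i)" using phi_carr it lk by auto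
      have "\<phi> (z + n * z) i j k = \<phi> z i j k \<oplus>\<^bsub>K i\<^esub> \<phi> (n * z) i j k"
        by (rule phi_add[OF it j(1) lk(2)])
      also have "\<phi> (n * z) i j k = \<one>\<^bsub>K i\<^esub> \<otimes>\<^bsub>K i\<^esub> \<phi> z i k k"
        using unit_mult_i[OF it j(1) lk(2) _ nd j(1) lk(2), of z] by simp
      also have "\<phi> z i j k = \<zero>\<^bsub>K i\<^esub>" using diag j lk by blast
      finally have "\<phi> (z + n * z) i j k = \<phi> z i k k" using akk by simp
      then have "\<phi> (z + n * z) i j k \<noteq> \<zero>\<^bsub>K i\<^esub>" using nz lk_eq by simp
      then show False using offdiag_contra[OF one z'C it j(1) lk(2) j(2)] by blast
    next
      case False
      then have m1: "m i = 1" using m_pos[OF it] by simp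
      then have qn2: "q i \<noteq> 2" using nq by simp
      have "q i \<ge> 3" using q_ge2[OF it] qn2 by simp
      then have "card (carrier (K i)) \<ge> 3" using cardK it by simp
      then have "card (carrier (K i) - {\<zero>\<^bsub>K i\<^esub>, \<one>\<^bsub>K i\<^esub>}) > 0"
        using card_Diff_subset[of "{\<zero>\<^bsub>K i\<^esub>, \<one>\<^bsub>K i\<^esub>}" "carrier (K i)"] finK[OF it]
        by (simp add: card_insert_if)
      then obtain d where d: "d \<in> carrier (K i)" "d \<noteq> \<zero>\<^bsub>K i\<^esub>" "d \<noteq> \<one>\<^bsub>K i\<^esub>"
        by (metis Diff_iff card_gt_0_iff ex_in_conv insertCI)
      have dU: "d \<in> Units (K i)" using R.field_Units d by auto
      define M where "M e = (\<lambda>i' (j'::nat) (k'::nat). if i' = i then e else (if j' = k' then \<one>\<^bsub>K i'\<^esub> else \<zero>\<^bsub>K i'\<^esub>))" for e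
      have Mc: "M e i' j' k' \<in> carrier (K i')" if "e \<in> carrier (K i)" "i' < t" for e i' j' k'
        using that ringK[OF that(2)] unfolding M_def by (auto simp: ring.ring_simprules)
      obtain r where r: "\<forall>i'<t. \<forall>j'<m i'. \<forall>k'<m i'. \<phi> r i' j' k' = M d i' j' k'"
        using phi_surj[of "M d"] Mc d by blast
      obtain s where s: "\<forall>i'<t. \<forall>j'<m i'. \<forall>k'<m i'. \<phi> s i' j' k' = M (inv\<^bsub>K i\<^esub> d) i' j' k'"
        using phi_surj[of "M (inv\<^bsub>K i\<^esub> d)"] Mc dU by blast
      have a: "\<phi> z i 0 0 \<in> carrier (K i)" using phi_carr it m1 by auto
      have nz0: "\<phi> z i 0 0 \<noteq> \<zero>\<^bsub>K i\<^esub>" using nz lk m1 by simp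
      have rz_i: "\<phi> (r * z) i 0 0 = d \<otimes>\<^bsub>K i\<^esub> \<phi> z i 0 0"
        using m1_mult[OF it m1] r it m1 unfolding M_def by simp
      have rz_o: "\<phi> (r * z) i' j' k' = \<phi> z i' j' k'" if "i' < t" "i' \<noteq> i" "j' < m i'" "k' < m i'" for i' j' k'
        by (rule diag_mult) (use that r in \<open>auto simp: M_def\<close>)
      have "f (s * (r * z)) = f z"
        unfolding phi_eq_iff[symmetric]
      proof (intro allI impI)
        fix i' j' k' assume i': "i' < t" and jk: "j' < m i'" "k' < m i'"
        show "\<phi> (s * (r * z)) i' j' k' = \<phi> z i' j' k'"
        proof (cases "i' = i")
          case True
          then have "j' = 0" "k' = 0" using jk m1 by auto
          moreover have "\<phi> (s * (r * z)) i 0 0 = inv\<^bsub>K i\<^esub> d \<otimes>\<^bsub>K i\<^esub> (d \<otimes>\<^bsub>K i\<^esub> \<phi> z i 0 0)"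
            using m1_mult[OF it m1, of s "r * z"] rz_i s it m1 unfolding M_def by simp
          moreover have "inv\<^bsub>K i\<^esub> d \<otimes>\<^bsub>K i\<^esub> (d \<otimes>\<^bsub>K i\<^esub> \<phi> z i 0 0) = \<phi> z i 0 0"
            using dU d a by (simp add: R.m_assoc[symmetric] R.Units_l_inv)
          ultimately show ?thesis using True by simp
        next
          case False
          have "\<phi> (s * (r * z)) i' j' k' = \<phi> (r * z) i' j' k'"
            by (rule diag_mult) (use i' jk s False in \<open>auto simp: M_def\<close>)
          then show ?thesis using rz_o[OF i' False jk] by simp
        qed
      qed
      then have rC: "f (r * z) \<in> C (f z)" by (rule C_scale)
      have ne: "\<tau> i z \<noteq> \<tau> i (r * z)"
      proof
        assume "\<tau> i z = \<tau> i (r * z)"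
        then have "\<phi> z i 0 0 = d \<otimes>\<^bsub>K i\<^esub> \<phi> z i 0 0"
          using tau_m1[OF it m1] rz_i by simp
        then have "\<one>\<^bsub>K i\<^esub> \<otimes>\<^bsub>K i\<^esub> \<phi> z i 0 0 = d \<otimes>\<^bsub>K i\<^esub> \<phi> z i 0 0"
          using a by simp
        then have "\<one>\<^bsub>K i\<^esub> = d" by (rule iffD1[OF R.m_rcancel[OF nz0 a R.one_closed d(1)]])
        then show False using d by simp
      qed
      have eq: "\<tau> i' z = \<tau> i' (r * z)" if "i' < t" "i' \<noteq> i" for i'
      proof -
        interpret R': ring "K i'" using ringK that by blast
        show ?thesis unfolding \<tau>_def
          by (rule R'.finsum_cong') (use rz_o[OF that] phi_carr[OF that(1)] in auto)
      qed
      have "\<psi> (f z) = 1" using one zC by blast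
      then have p1: "\<Psi> z = 1" by (simp add: psi_f)
      have "\<psi> (f (r * z)) = 1" using one rC by blast
      then have p2: "\<Psi> (r * z) = 1" by (simp add: psi_f)
      show False by (rule two_vals[OF it p1 p2 ne eq])
    qed
  qed
qed

lemma forward:
  fixes x :: 'a and \<omega> :: "'a \<Rightarrow> real"
  assumes hw: "normalized_homogeneous_weight \<omega>" and x0: "x \<noteq> 0" and w: "\<omega> x = 0"
  shows "card {i. i < t \<and> q i = 2 \<and> m i = 1} \<ge> 2"
proof (rule ccontr)
  assume lt: "\<not> card {i. i < t \<and> q i = 2 \<and> m i = 1} \<ge> 2"
  define S where "S = {i. i < t \<and> q i = 2 \<and> m i = 1}"
  have finS: "finite S" unfolding S_def by simp
  have one: "\<forall>y\<in>C x. \<psi> y = 1" by (rule psi_one_on_class[OF hw w])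
  then have "\<psi> x = 1" using C_self by blast
  then have "x \<in> range f" using psi_nonrange by fastforce
  then obtain z where xz: "x = f z" by blast
  have one': "\<forall>y\<in>C (f z). \<psi> y = 1" using one xz by simp
  have "\<not>(\<forall>i<t. \<forall>j<m i. \<forall>k<m i. \<phi> z i j k = \<zero>\<^bsub>K i\<^esub>)" using phi_ker x0 xz by simp
  then obtain i0 l k where i0: "i0 < t" "l < m i0" "k < m i0" "\<phi> z i0 l k \<noteq> \<zero>\<^bsub>K i0\<^esub>" by blast
  have A0: "q i0 = 2 \<and> m i0 = 1" by (rule claimA[OF one' i0])
  have i0S: "i0 \<in> S" unfolding S_def using A0 i0 by simp
  have onlyi0: "i = i0" if "i \<in> S" for i
  proof (rule ccontr)
    assume "i \<noteq> i0"
    then have "card {i0, i} = 2" by simp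
    moreover have "{i0, i} \<subseteq> S" using i0S that by simp
    ultimately have "card S \<ge> 2" using card_mono[OF finS] by metis
    then show False using lt S_def by simp
  qed
  have zero_other: "\<tau> i z = \<zero>\<^bsub>K i\<^esub>" if "i < t" "i \<noteq> i0" for i
  proof (rule tau_zero_comp[OF that(1)])
    fix j k assume jk: "j < m i" "k < m i"
    show "\<phi> z i j k = \<zero>\<^bsub>K i\<^esub>"
    proof (rule ccontr)
      assume "\<phi> z i j k \<noteq> \<zero>\<^bsub>K i\<^esub>"
      then have "q i = 2 \<and> m i = 1" by (rule claimA[OF one' that(1) jk])
      then have "i \<in> S" unfolding S_def using that by simp
      then show False using onlyi0 that by blast
    qed
  qed
  have "l = 0" "k = 0" using i0 A0 by auto
  then have t0: "\<tau> i0 z \<noteq> \<zero>\<^bsub>K i0\<^esub>" using tau_m1[OF i0(1)] A0 i0 by simp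
  have "\<Psi> z = g i0 (\<tau> i0 z) * (\<Prod>i'\<in>{..<t} - {i0}. g i' (\<tau> i' z))" by (rule Psi_split[OF i0(1)])
  also have "(\<Prod>i'\<in>{..<t} - {i0}. g i' (\<tau> i' z)) = 1"
    by (rule prod.neutral) (auto simp: zero_other g_def)
  also have "g i0 (\<tau> i0 z) = -1" using t0 A0 unfolding g_def by simp
  finally have "\<Psi> z = -1" by simp
  moreover have "\<Psi> z = 1" using one' C_self[of "f z"] psi_f by metis
  ultimately show False by simp
qed

lemma phi_zero_col:
  assumes "i < t" "j < m i" "k < m i" "\<And>l. l < m i \<Longrightarrow> \<phi> w i l k = \<zero>\<^bsub>K i\<^esub>"
  shows "\<phi> (r * w) i j k = \<zero>\<^bsub>K i\<^esub>"
proof -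
  interpret R: ring "K i" using ringK assms by blast
  have "\<phi> (r * w) i j k = (\<Oplus>\<^bsub>K i\<^esub> l\<in>{..<m i}. \<zero>\<^bsub>K i\<^esub>)"
    unfolding phi_mult[OF assms(1-3)]
    by (rule R.finsum_cong') (use assms phi_carr in auto)
  then show ?thesis by simp
qed

definition E where "E U = (SOME e. \<forall>i<t. \<forall>j<m i. \<forall>k<m i.
    \<phi> e i j k = (if i \<in> U then \<one>\<^bsub>K i\<^esub> else \<zero>\<^bsub>K i\<^esub>))"

lemma E_phi: "i < t \<Longrightarrow> j < m i \<Longrightarrow> k < m i \<Longrightarrow>
    \<phi> (E U) i j k = (if i \<in> U then \<one>\<^bsub>K i\<^esub> else \<zero>\<^bsub>K i\<^esub>)"
proof -
  assume a: "i < t" "j < m i" "k < m i"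
  have "\<exists>e. \<forall>i<t. \<forall>j<m i. \<forall>k<m i. \<phi> e i j k = (if i \<in> U then \<one>\<^bsub>K i\<^esub> else \<zero>\<^bsub>K i\<^esub>)"
    by (rule phi_surj) (use ringK in \<open>auto simp: ring.ring_simprules\<close>)
  then have "\<forall>i<t. \<forall>j<m i. \<forall>k<m i. \<phi> (E U) i j k = (if i \<in> U then \<one>\<^bsub>K i\<^esub> else \<zero>\<^bsub>K i\<^esub>)"
    unfolding E_def by (rule someI_ex)
  then show ?thesis using a by blast
qed

context
  fixes U :: "nat set"
  assumes US: "\<And>i. i \<in> U \<Longrightarrow> i < t \<and> q i = 2 \<and> m i = 1"
begin

lemma E_mult:
  assumes V: "V \<subseteq> U"
  shows "f (E V * E U) = f (E V)"
  unfolding phi_eq_iff[symmetric]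
proof (intro allI impI)
  fix i j k assume a: "i < t" "j < m i" "k < m i"
  interpret R: ring "K i" using ringK a by blast
  show "\<phi> (E V * E U) i j k = \<phi> (E V) i j k"
  proof (cases "i \<in> U")
    case True
    then have m1: "m i = 1" using US by blast
    then have "j = 0" "k = 0" using a by auto
    then show ?thesis using m1_mult[OF a(1) m1] E_phi a True by auto
  next
    case False
    then have "i \<notin> V" using V by blast
    moreover have "\<phi> (E V * E U) i j k = \<zero>\<^bsub>K i\<^esub>"
      by (rule phi_zero_col[OF a]) (use E_phi[OF a(1)] a False in simp)
    ultimately show ?thesis using E_phi[OF a] by simp
  qed
qed

lemma mult_E:
  obtains V where "V \<subseteq> U" "f (r * E U) = f (E V)"
proof -
  define V where "V = {i \<in> U. \<phi> r i 0 0 = \<one>\<^bsub>K i\<^esub>}"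
  have "f (r * E U) = f (E V)"
    unfolding phi_eq_iff[symmetric]
  proof (intro allI impI)
    fix i j k assume a: "i < t" "j < m i" "k < m i"
    interpret R: ring "K i" using ringK a by blast
    show "\<phi> (r * E U) i j k = \<phi> (E V) i j k"
    proof (cases "i \<in> U")
      case True
      then have m1: "m i = 1" and q2: "q i = 2" using US by auto
      then have jk: "j = 0" "k = 0" using a by auto
      have c: "\<phi> r i 0 0 \<in> carrier (K i)" using phi_carr a m1 by auto
      then have "\<phi> r i 0 0 = \<zero>\<^bsub>K i\<^esub> \<or> \<phi> r i 0 0 = \<one>\<^bsub>K i\<^esub>"
        using carrier2[OF a(1) q2] by auto
      then show ?thesis using m1_mult[OF a(1) m1, of r "E U"] E_phi[OF a] jk True c
        unfolding V_def by auto
    next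
      case False
      then have "i \<notin> V" unfolding V_def by blast
      moreover have "\<phi> (r * E U) i j k = \<zero>\<^bsub>K i\<^esub>"
        by (rule phi_zero_col[OF a]) (use E_phi[OF a(1)] a False in simp)
      ultimately show ?thesis using E_phi[OF a] by simp
    qed
  qed
  then show ?thesis using that[of V] unfolding V_def by blast
qed

lemma PL_E: "PL (f (E U)) = (\<lambda>V. f (E V)) ` Pow U"
proof
  show "PL (f (E U)) \<subseteq> (\<lambda>V. f (E V)) ` Pow U"
  proof
    fix y assume "y \<in> PL (f (E U))"
    then obtain r where "y = r * f (E U)" unfolding pl_iff by blast
    then have y: "y = f (r * E U)" by (simp add: fmul)
    obtain V where "V \<subseteq> U" "f (r * E U) = f (E V)" by (rule mult_E)
    then show "y \<in> (\<lambda>V. f (E V)) ` Pow U" using y by blast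
  qed
next
  show "(\<lambda>V. f (E V)) ` Pow U \<subseteq> PL (f (E U))"
  proof
    fix y assume "y \<in> (\<lambda>V. f (E V)) ` Pow U"
    then obtain V where V: "V \<subseteq> U" "y = f (E V)" by blast
    then have "y = E V * f (E U)" using E_mult[OF V(1)] by (simp add: fmul)
    then show "y \<in> PL (f (E U))" unfolding pl_iff by blast
  qed
qed

lemma E_inj: "inj_on (\<lambda>V. f (E V)) (Pow U)"
proof (rule inj_onI)
  fix V V' assume V: "V \<in> Pow U" "V' \<in> Pow U" and eq: "f (E V) = f (E V')"
  show "V = V'"
  proof (rule ccontr)
    assume "V \<noteq> V'"
    then obtain i where i: "i \<in> U" "(i \<in> V) \<noteq> (i \<in> V')" using V by blast
    then have it: "i < t" and m1: "m i = 1" using US by auto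
    interpret R: field "K i" using fieldK it by blast
    have "\<phi> (E V) i 0 0 = \<phi> (E V') i 0 0" using eq phi_eq_iff it m1 by (metis zero_less_one)
    then show False using E_phi[OF it, of 0 0] m1 i by (auto split: if_splits)
  qed
qed

lemma E_empty: "f (E {}) = 0"
proof -
  have "\<forall>i<t. \<forall>j<m i. \<forall>k<m i. \<phi> (E {}) i j k = \<zero>\<^bsub>K i\<^esub>" using E_phi by simp
  then show ?thesis using phi_ker by blast
qed

end

lemma sum_PL_E:
  assumes US: "\<And>i. i \<in> U \<Longrightarrow> i < t \<and> q i = 2 \<and> m i = 1"
    and wsum: "\<And>x. x \<noteq> 0 \<Longrightarrow> (\<Sum>y\<in>PL x. \<omega> y) = real (card (PL x))"
    and ne: "U \<noteq> {}" and finU: "finite U"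
  shows "(\<Sum>V\<in>Pow U. \<omega> (f (E V))) = real (card (Pow U))"
proof -
  have inj: "inj_on (\<lambda>V. f (E V)) (Pow U)" by (rule E_inj[OF US]) 
  have "f (E U) \<noteq> f (E {})" using inj_onD[OF inj] ne by blast
  then have nz: "f (E U) \<noteq> 0" using E_empty[OF US] by simp
  have PE: "PL (f (E U)) = (\<lambda>V. f (E V)) ` Pow U" by (rule PL_E[OF US])
  have "(\<Sum>V\<in>Pow U. \<omega> (f (E V))) = (\<Sum>y\<in>PL (f (E U)). \<omega> y)"
    unfolding PE using sum.reindex[OF inj, of \<omega>] by (simp add: comp_def)
  also have "\<dots> = real (card (PL (f (E U))))" by (rule wsum[OF nz])
  also have "card (PL (f (E U))) = card (Pow U)" unfolding PE by (rule card_image[OF inj])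
  finally show ?thesis .
qed

lemma backward:
  fixes \<omega> :: "'a \<Rightarrow> real"
  assumes hw: "normalized_homogeneous_weight \<omega>"
    and c2: "card {i. i < t \<and> q i = 2 \<and> m i = 1} \<ge> 2"
  shows "\<exists>x. x \<noteq> 0 \<and> \<omega> x = 0"
proof -
  have H: "\<omega> 0 = 0 \<and> (\<forall>x y. PL x = PL y \<longrightarrow> \<omega> x = \<omega> y) \<and>
      (\<forall>x. x \<noteq> 0 \<longrightarrow> (\<Sum>y\<in>PL x. \<omega> y) = real (card (PL x)))"
      using hw unfolding normalized_homogeneous_weight_def by assumption
  have w0: "\<omega> 0 = 0" using H by (rule conjunct1)
  have wsum': "\<forall>x. x \<noteq> 0 \<longrightarrow> (\<Sum>y\<in>PL x. \<omega> y) = real (card (PL x))"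
    using H by (rule conjunct2[THEN conjunct2])
  note wsum = wsum'[rule_format]
  define S where "S = {i. i < t \<and> q i = 2 \<and> m i = 1}"
  have cS: "card S \<ge> 2" using c2 unfolding S_def .
  have "S \<noteq> {}" using cS by (cases "S = {}") auto
  then obtain i1 where i1: "i1 \<in> S" by blast
  have "finite S" unfolding S_def by simp
  then have "card (S - {i1}) \<ge> 1" using cS i1 by (simp add: card_Diff_singleton)
  then have "S - {i1} \<noteq> {}" by (cases "S - {i1} = {}") auto
  then obtain i2 where i2: "i2 \<in> S" "i2 \<noteq> i1" by blast
  have US: "\<And>i. i \<in> {i1, i2} \<Longrightarrow> i < t \<and> q i = 2 \<and> m i = 1" using i1 i2 unfolding S_def by auto
  have E0: "f (E {}) = 0" by (rule E_empty[OF US])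
  have s1: "\<omega> (f (E {i1})) = 2"
  proof -
    have "(\<Sum>V\<in>Pow {i1}. \<omega> (f (E V))) = real (card (Pow {i1}))"
      by (rule sum_PL_E[OF _ wsum]) (use i1 in \<open>auto simp: S_def\<close>)
    moreover have "Pow {i1} = {{}, {i1}}" by auto
    moreover have "card (Pow {i1}) = 2" by (simp add: card_Pow)
    ultimately have "\<omega> (f (E {})) + \<omega> (f (E {i1})) = 2" by simp
    then show ?thesis using w0 E0 by simp
  qed
  have s2: "\<omega> (f (E {i2})) = 2"
  proof -
    have "(\<Sum>V\<in>Pow {i2}. \<omega> (f (E V))) = real (card (Pow {i2}))"
      by (rule sum_PL_E[OF _ wsum]) (use i2 in \<open>auto simp: S_def\<close>)
    moreover have "Pow {i2} = {{}, {i2}}" by auto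
    moreover have "card (Pow {i2}) = 2" by (simp add: card_Pow)
    ultimately have "\<omega> (f (E {})) + \<omega> (f (E {i2})) = 2" by simp
    then show ?thesis using w0 E0 by simp
  qed
  have s: "(\<Sum>V\<in>Pow {i1, i2}. \<omega> (f (E V))) = real (card (Pow {i1, i2}))"
    by (rule sum_PL_E[OF US wsum]) auto
  have P: "Pow {i1, i2} = {{}, {i1}, {i2}, {i1, i2}}" by (auto simp: Pow_insert)
  have d: "{} \<notin> {{i1}, {i2}, {i1, i2}}" "{i1} \<notin> {{i2}, {i1, i2}}" "{i2} \<notin> {{i1, i2}}"
    using i2(2) by auto
  have ex: "(\<Sum>V\<in>Pow {i1, i2}. \<omega> (f (E V))) =
      \<omega> (f (E {})) + (\<omega> (f (E {i1})) + (\<omega> (f (E {i2})) + \<omega> (f (E {i1, i2}))))"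
    unfolding P using d by simp
  have cP: "card (Pow {i1, i2}) = 4" using i2(2) by (simp add: card_Pow)
  have "\<omega> (f (E {})) + (\<omega> (f (E {i1})) + (\<omega> (f (E {i2})) + \<omega> (f (E {i1, i2})))) = 4"
    using s unfolding ex cP by simp
  moreover have "\<omega> (f (E {})) = 0" using E0 w0 by simp
  ultimately have z: "\<omega> (f (E {i1, i2})) = 0" using s1 s2 by linarith
  have inj2: "inj_on (\<lambda>V. f (E V)) (Pow {i1, i2})" by (rule E_inj[OF US])
  have "f (E {i1, i2}) \<noteq> f (E {})"
  proof
    assume "f (E {i1, i2}) = f (E {})"
    then have "{i1, i2} = ({}::nat set)" using inj_onD[OF inj2] by blast
    then show False by simp
  qed
  then have "f (E {i1, i2}) \<noteq> 0" using E0 by simp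
  then show ?thesis using z by blast
qed

end

theorem corollary4p3:
  fixes \<omega> :: "'a::ring_1 \<Rightarrow> real"
    and t :: nat and q m :: "nat \<Rightarrow> nat"
    and K :: "nat \<Rightarrow> 'c ring"
    and \<phi> :: "'a \<Rightarrow> nat \<Rightarrow> nat \<Rightarrow> nat \<Rightarrow> 'c"
  assumes "finite_frobenius_ring TYPE('a)"
    and "wedderburn_artin t q m K \<phi>"
    and "normalized_homogeneous_weight \<omega>"
  shows "(\<exists>x. x \<noteq> 0 \<and> \<omega> x = 0) \<longleftrightarrow> card {i. i < t \<and> q i = 2 \<and> m i = 1} \<ge> 2"
proof -
  have fr: "finite (UNIV :: 'a set) \<and>
     (\<exists>f :: 'a \<Rightarrow> 'a. (\<forall>x y. f (x + y) = f x + f y) \<and> (\<forall>r x. f (r * x) = r * f x) \<and>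
        range f = left_socle \<and> {x. f x = 0} = jacobson_rad)"
    using assms(1) unfolding finite_frobenius_ring_def by blast
  then obtain f :: "'a \<Rightarrow> 'a" where fa: "\<forall>x y. f (x + y) = f x + f y"
    and fm: "\<forall>r x. f (r * x) = r * f x" and fr1: "range f = left_socle"
    and fk: "{x. f x = 0} = jacobson_rad" by blast
  interpret W: WAF t q m K \<phi> f
    by (unfold_locales) (use assms(2) fa fm fr1 fk fr in auto)
  show ?thesis
  proof
    assume "\<exists>x. x \<noteq> 0 \<and> \<omega> x = 0"
    then obtain x where "x \<noteq> 0" "\<omega> x = 0" by blast
    then show "card {i. i < t \<and> q i = 2 \<and> m i = 1} \<ge> 2" using W.forward[OF assms(3)] by blast
  next
    assume "card {i. i < t \<and> q i = 2 \<and> m i = 1} \<ge> 2"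
    then show "\<exists>x. x \<noteq> 0 \<and> \<omega> x = 0" by (rule W.backward[OF assms(3)])
  qed
qed

end
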